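(* Let $\{\mathbf{x}^k=(\mathbf{x}_{(i)}^k)_i\}$, $\{\mathbf{y}^k=(\mathbf{y}_{(i)}^k)_i\}$, $\{\phi^k\}$ be generated by SONATA in the setting below, and let $\widetilde{\mathbf{x}}_i^k$ be the local minimizers it computes. There is a finite constant $B_2>0$, independent of $k$, such that for all $k\ge0$ and $i=1,\dots,I$, $$\|\widetilde{\mathbf{x}}_i^k-\widehat{\mathbf{x}}_i(\mathbf{x}_{(i)}^k)\|\le B_2\Big(\|\mathbf{y}_{(i)}^k-\bar{\mathbf{y}}_\phi^k\|+\sum_{j=1}^I\|\mathbf{x}_{(j)}^k-\bar{\mathbf{x}}_\phi^k\|\Big),$$ where $\bar{\mathbf{x}}_\phi^k\triangleq\frac1I\sum_{j}\phi_{(j)}^k\mathbf{x}_{(j)}^k$ and $\bar{\mathbf{y}}_\phi^k\triangleq\frac1I\sum_j\phi_{(j)}^k\mathbf{y}_{(j)}^k$.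
   Context: Problem: minimize $V(\mathbf{x})\triangleq F(\mathbf{x})+G(\mathbf{x})$, $F=\sum_{i=1}^If_i$, over $\mathbf{x}\in X$, where $X\subseteq\mathbb{R}^m$ is nonempty closed convex; each $f_i:O\to\mathbb{R}$ is $C^1$ on an open set $O\supseteq X$ with $\nabla f_i$ $L_i$-Lipschitz on $X$; $G:O\to\mathbb{R}$ is convex; $V$ is bounded below on $X$. Network: digraphs $G^k=(\{1,\dots,I\},E^k)$, $(j,i)\in E^k$ meaning $j$ can send to $i$, $B$-strongly connected ($\bigcup_{t=k}^{k+B-1}E^t$ strongly connected for every $k$). $\mathbf{A}^k=(a_{ij}^k)$: $a_{ij}^k=0$ if $j\ne i$ and $(j,i)\notin E^k$, $a_{ij}^k\ge\kappa$ if $(j,i)\in E^k$, $a_{ii}^k\ge\kappa$ ($\kappa>0$), nonnegative with $\mathbf{1}^T\mathbf{A}^k=\mathbf{1}^T$. Assumption III.14 on $\widetilde f_i:O\times O\to\mathbb{R}$: $\widetilde f_i(\cdot|\mathbf{x})$ is $\tau_i$-strongly convex on $X$ for all $\mathbf{x}\in X$; $C^1$ on $O$ with $\nabla\widetilde f_i(\mathbf{x}|\mathbf{x})=\nabla f_i(\mathbf{x})$; $\nabla\widetilde f_i(\mathbf{x}|\cdot)$ is $\widetilde L_i$-Lipschitz on $X$. SONATA with step-sizes $\gamma^k\in(0,1]$: initialize $\mathbf{x}_{(i)}^0\in X$, $\phi_{(i)}^0=1$, $\mathbf{y}_{(i)}^0=\nabla f_i(\mathbf{x}_{(i)}^0)$;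 at iteration $k$, $\widetilde{\mathbf{x}}_i^k=\operatorname{argmin}_{\mathbf{x}\in X}\{\widetilde f_i(\mathbf{x}|\mathbf{x}_{(i)}^k)+(I\mathbf{y}_{(i)}^k-\nabla f_i(\mathbf{x}_{(i)}^k))^T(\mathbf{x}-\mathbf{x}_{(i)}^k)+G(\mathbf{x})\}$, $\mathbf{x}_{(i)}^{k+1/2}=\mathbf{x}_{(i)}^k+\gamma^k(\widetilde{\mathbf{x}}_i^k-\mathbf{x}_{(i)}^k)$, $\phi_{(i)}^{k+1}=\sum_ja_{ij}^k\phi_{(j)}^k$, $\mathbf{x}_{(i)}^{k+1}=\frac{1}{\phi_{(i)}^{k+1}}\sum_ja_{ij}^k\phi_{(j)}^k\mathbf{x}_{(j)}^{k+1/2}$, $\mathbf{y}_{(i)}^{k+1}=\frac{1}{\phi_{(i)}^{k+1}}\sum_ja_{ij}^k\phi_{(j)}^k\mathbf{y}_{(j)}^k+\frac{1}{\phi_{(i)}^{k+1}}(\nabla f_i(\mathbf{x}_{(i)}^{k+1})-\nabla f_i(\mathbf{x}_{(i)}^k))$. The map $\widehat{\mathbf{x}}_i(\mathbf{z})\triangleq\operatorname{argmin}_{\mathbf{x}\in X}\{\widetilde f_i(\mathbf{x}|\mathbf{z})+(\nabla F(\mathbf{z})-\nabla f_i(\mathbf{z}))^T(\mathbf{x}-\mathbf{z})+G(\mathbf{x})\}$ for $\mathbf{z}\in X$. *)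

theory Defs
  imports "HOL-Analysis.Analysis"
begin

definition strongly_convex_on :: "real \<Rightarrow> 'a::real_normed_vector set \<Rightarrow> ('a \<Rightarrow> real) \<Rightarrow> bool" where
  "strongly_convex_on tau X h \<longleftrightarrow> tau > 0 \<and>
     (\<forall>x\<in>X. \<forall>y\<in>X. \<forall>t::real. 0 \<le> t \<and> t \<le> 1 \<longrightarrow>
        h ((1 - t) *\<^sub>R x + t *\<^sub>R y) \<le> (1 - t) * h x + t * h y - tau / 2 * t * (1 - t) * (norm (x - y))\<^sup>2)"

definition argmin_on :: "'a set \<Rightarrow> ('a \<Rightarrow> real) \<Rightarrow> 'a" where
  "argmin_on X h = (SOME x. x \<in> X \<and> (\<forall>y\<in>X. h x \<le> h y))"

definition strongly_connected_on :: "nat set \<Rightarrow> (nat \<times> nat) set \<Rightarrow> bool" where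
  "strongly_connected_on V E \<longleftrightarrow> (\<forall>i\<in>V. \<forall>j\<in>V. (i, j) \<in> (E \<inter> (V \<times> V))\<^sup>*)"

definition xhat :: "'a::real_inner set \<Rightarrow> nat \<Rightarrow> (nat \<Rightarrow> 'a \<Rightarrow> 'a \<Rightarrow> real) \<Rightarrow> (nat \<Rightarrow> 'a \<Rightarrow> 'a)
    \<Rightarrow> ('a \<Rightarrow> real) \<Rightarrow> nat \<Rightarrow> 'a \<Rightarrow> 'a" where
  "xhat X N ft gradf G i z =
     argmin_on X (\<lambda>w. ft i w z + inner ((\<Sum>j\<in>{1..N}. gradf j z) - gradf i z) (w - z) + G w)"

end

theory Submission
  imports Defs
begin

lemma sc_add_convex:
  assumes "strongly_convex_on tau X f" "convex_on X g"
  shows "strongly_convex_on tau X (\<lambda>w. f w + g w)"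
  unfolding strongly_convex_on_def
proof (intro conjI ballI allI impI)
  show "tau > 0" using assms(1) by (simp add: strongly_convex_on_def)
  fix x y and t :: real assume xy: "x \<in> X" "y \<in> X" and t: "0 \<le> t \<and> t \<le> 1"
  have 1: "f ((1 - t) *\<^sub>R x + t *\<^sub>R y) \<le> (1 - t) * f x + t * f y - tau / 2 * t * (1 - t) * (norm (x - y))\<^sup>2"
    using assms(1) xy t by (simp add: strongly_convex_on_def)
  have 2: "g ((1 - t) *\<^sub>R x + t *\<^sub>R y) \<le> (1 - t) * g x + t * g y"
    using assms(2) xy t unfolding convex_on_def by auto
  show "f ((1 - t) *\<^sub>R x + t *\<^sub>R y) + g ((1 - t) *\<^sub>R x + t *\<^sub>R y)
        \<le> (1 - t) * (f x + g x) + t * (f y + g y) - tau / 2 * t * (1 - t) * (norm (x - y))\<^sup>2"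
    using 1 2 by (simp add: algebra_simps)
qed

lemma convex_on_affine_inner:
  assumes "convex X"
  shows "convex_on X (\<lambda>w. inner c (w - z))"
  unfolding convex_on_def
proof (intro conjI ballI allI impI assms)
  fix x y and u v :: real assume uv: "0 \<le> u" "0 \<le> v" "u + v = 1"
  have "inner c (u *\<^sub>R x + v *\<^sub>R y - z) = u * inner c x + v * inner c y - inner c z"
    by (simp add: inner_diff_right inner_add_right)
  also have "\<dots> = u * inner c x + v * inner c y - (u + v) * inner c z" using uv by simp
  also have "\<dots> = u * inner c (x - z) + v * inner c (y - z)" by (simp add: inner_diff_right algebra_simps)
  finally show "inner c (u *\<^sub>R x + v *\<^sub>R y - z) \<le> u * inner c (x - z) + v * inner c (y - z)" by simp
qed

lemma sc_min_exists:
  fixes h :: "'a::euclidean_space \<Rightarrow> real"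
  assumes "closed X" "convex X" "X \<noteq> {}" "continuous_on X h" "strongly_convex_on tau X h"
  shows "\<exists>u\<in>X. \<forall>w\<in>X. h u \<le> h w"
proof -
  have tau: "tau > 0" using assms(5) by (simp add: strongly_convex_on_def)
  obtain x0 where x0: "x0 \<in> X" using assms(3) by auto
  have K: "compact (X \<inter> cball x0 1)" "X \<inter> cball x0 1 \<noteq> {}"
    using assms(1) x0 by (auto intro: closed_Int_compact)
  obtain q where q: "q \<in> X \<inter> cball x0 1" "\<forall>p\<in>X \<inter> cball x0 1. h q \<le> h p"
    using continuous_attains_inf[OF K continuous_on_subset[OF assms(4)]] by auto
  define m1 where "m1 = h q"
  have m1x0: "m1 \<le> h x0" using q x0 m1_def by auto
  define R where "R = 1 + 2 * (h x0 - m1) / tau"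
  have R1: "R \<ge> 1" using m1x0 tau by (simp add: R_def)
  have S: "compact (X \<inter> cball x0 R)" "X \<inter> cball x0 R \<noteq> {}"
    using assms(1) x0 R1 by (auto intro: closed_Int_compact)
  obtain u where u: "u \<in> X \<inter> cball x0 R" "\<forall>p\<in>X \<inter> cball x0 R. h u \<le> h p"
    using continuous_attains_inf[OF S continuous_on_subset[OF assms(4)]] by auto
  have hu0: "h u \<le> h x0" using u x0 R1 by auto
  have far: "h w > h x0" if w: "w \<in> X" "norm (w - x0) > R" for w
  proof (rule ccontr)
    assume nw: "\<not> h w > h x0"
    define d where "d = norm (w - x0)"
    have d1: "d > 1" using w R1 d_def by auto
    define t where "t = 1 / d"
    have t01: "0 \<le> t" "t \<le> 1" using d1 by (auto simp: t_def)
    define p where "p = (1 - t) *\<^sub>R x0 + t *\<^sub>R w"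
    have pX: "p \<in> X" using assms(2) x0 w t01 unfolding p_def convex_alt
      by (metis add.commute scaleR_collapse)
    have "p - x0 = t *\<^sub>R (w - x0)" by (simp add: p_def algebra_simps)
    hence "dist x0 p = t * d" using t01 by (simp add: dist_norm norm_minus_commute d_def)
    hence "dist x0 p = 1" using d1 by (simp add: t_def)
    hence "p \<in> X \<inter> cball x0 1" using pX by auto
    hence m1p: "m1 \<le> h p" using q m1_def by auto
    have "h p \<le> (1 - t) * h x0 + t * h w - tau / 2 * t * (1 - t) * (norm (x0 - w))\<^sup>2"
      using assms(5) x0 w t01 unfolding strongly_convex_on_def p_def by blast
    note sc = this
    have nd: "(norm (x0 - w))\<^sup>2 = d^2" by (simp add: d_def norm_minus_commute)
    have td: "t * (1 - t) * d^2 = d - 1" using d1 by (simp add: t_def field_simps power2_eq_square)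
    have "tau / 2 * t * (1 - t) * (norm (x0 - w))\<^sup>2 = tau / 2 * (t * (1 - t) * d^2)"
      by (simp only: nd mult.assoc)
    also have "\<dots> = tau / 2 * (d - 1)" using td by simp
    finally have S: "tau / 2 * t * (1 - t) * (norm (x0 - w))\<^sup>2 = tau / 2 * (d - 1)" .
    from sc have "h p \<le> (1 - t) * h x0 + t * h w - tau / 2 * (d - 1)" by (simp only: S)
    hence "h p \<le> h x0 - t * h x0 + t * h w - tau / 2 * (d - 1)" by (simp add: left_diff_distrib)
    moreover have "t * h w \<le> t * h x0" using nw t01 by (intro mult_left_mono) auto
    ultimately have "h p \<le> h x0 - tau / 2 * (d - 1)" by linarith
    hence "tau / 2 * (d - 1) \<le> h x0 - m1" using m1p by linarith
    hence "tau * (d - 1) \<le> 2 * (h x0 - m1)" by simp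
    hence "d - 1 \<le> 2 * (h x0 - m1) / tau" using tau by (simp add: field_simps)
    thus False using w d_def R_def by linarith
  qed
  show ?thesis
  proof (intro bexI ballI)
    show "u \<in> X" using u by auto
    fix w assume w: "w \<in> X"
    show "h u \<le> h w"
    proof (cases "norm (w - x0) \<le> R")
      case True thus ?thesis using u w by (auto simp: dist_norm norm_minus_commute)
    next
      case False thus ?thesis using far[OF w] hu0 by linarith
    qed
  qed
qed

lemma sc_min_dist:
  fixes h1 h2 :: "'a::real_inner \<Rightarrow> real"
  assumes "convex X" "strongly_convex_on tau X h1" "strongly_convex_on tau X h2"
    and u: "u \<in> X" "\<forall>w\<in>X. h1 u \<le> h1 w" and v: "v \<in> X" "\<forall>w\<in>X. h2 v \<le> h2 w"
    and diff: "\<And>w. w \<in> X \<Longrightarrow> h1 w - h2 w = inner c w + k"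
  shows "norm (u - v) \<le> 2 / tau * norm c"
proof -
  have tau: "tau > 0" using assms(2) by (simp add: strongly_convex_on_def)
  define m where "m = (1 - 1/2) *\<^sub>R u + (1/2::real) *\<^sub>R v"
  have mX: "m \<in> X" using assms(1) u v unfolding m_def convex_def by auto
  define d where "d = norm (u - v)"
  have sc1: "h1 ((1 - t) *\<^sub>R x + t *\<^sub>R y) \<le> (1 - t) * h1 x + t * h1 y - tau / 2 * t * (1 - t) * (norm (x - y))\<^sup>2"
    if "x \<in> X" "y \<in> X" "0 \<le> t" "t \<le> 1" for x y t
    using assms(2) that unfolding strongly_convex_on_def by blast
  have sc2: "h2 ((1 - t) *\<^sub>R x + t *\<^sub>R y) \<le> (1 - t) * h2 x + t * h2 y - tau / 2 * t * (1 - t) * (norm (x - y))\<^sup>2"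
    if "x \<in> X" "y \<in> X" "0 \<le> t" "t \<le> 1" for x y t
    using assms(3) that unfolding strongly_convex_on_def by blast
  have a1: "h1 m \<le> h1 u / 2 + h1 v / 2 - tau * d\<^sup>2 / 8"
    using sc1[OF u(1) v(1), of "1/2"] unfolding m_def d_def by simp
  have m': "m = (1 - 1/2) *\<^sub>R v + (1/2::real) *\<^sub>R u" by (simp add: m_def algebra_simps)
  have a2: "h2 m \<le> h2 v / 2 + h2 u / 2 - tau * d\<^sup>2 / 8"
    using sc2[OF v(1) u(1), of "1/2"] unfolding m' d_def by (simp add: norm_minus_commute)
  have "h1 u \<le> h1 m" "h2 v \<le> h2 m" using u v mX by auto
  hence "tau * d\<^sup>2 / 2 \<le> (h1 v - h2 v) - (h1 u - h2 u)" using a1 a2 by linarith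
  hence "tau / 2 * d\<^sup>2 \<le> (h1 v - h2 v) - (h1 u - h2 u)" by simp
  also have "\<dots> = inner c (v - u)" using diff u v by (simp add: inner_diff_right)
  also have "\<dots> \<le> norm c * d" using norm_cauchy_schwarz[of c "v - u"]
    by (simp add: d_def norm_minus_commute)
  finally have *: "tau / 2 * d\<^sup>2 \<le> norm c * d" .
  show ?thesis
  proof (cases "d = 0")
    case True thus ?thesis using tau d_def by simp
  next
    case False
    hence "d > 0" using d_def by simp
    hence "tau / 2 * d \<le> norm c" using * by (simp add: power2_eq_square)
    thus ?thesis using tau d_def by (simp add: field_simps)
  qed
qed

theorem mainTheorem16:
  fixes X Om :: "'a::euclidean_space set"
    and N :: nat
    and f :: "nat \<Rightarrow> 'a \<Rightarrow> real" and gradf :: "nat \<Rightarrow> 'a \<Rightarrow> 'a" and L :: "nat \<Rightarrow> real"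
    and G :: "'a \<Rightarrow> real"
    and ft :: "nat \<Rightarrow> 'a \<Rightarrow> 'a \<Rightarrow> real" and gradft :: "nat \<Rightarrow> 'a \<Rightarrow> 'a \<Rightarrow> 'a"
    and tau Lt :: "nat \<Rightarrow> real"
    and E :: "nat \<Rightarrow> (nat \<times> nat) set" and B :: nat
    and a :: "nat \<Rightarrow> nat \<Rightarrow> nat \<Rightarrow> real" and \<kappa> :: real
    and \<gamma> :: "nat \<Rightarrow> real"
    and x xh xt y :: "nat \<Rightarrow> nat \<Rightarrow> 'a" and \<phi> :: "nat \<Rightarrow> nat \<Rightarrow> real"
  assumes N_pos: "N \<ge> 1"
    and X_ne: "X \<noteq> {}" and X_closed: "closed X" and X_convex: "convex X"
    and O_open: "open Om" and X_sub_O: "X \<subseteq> Om"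
    and f_diff: "\<And>i w. i \<in> {1..N} \<Longrightarrow> w \<in> Om \<Longrightarrow> (f i has_derivative (\<lambda>h. inner (gradf i w) h)) (at w)"
    and f_C1: "\<And>i. i \<in> {1..N} \<Longrightarrow> continuous_on Om (gradf i)"
    and f_lip: "\<And>i. i \<in> {1..N} \<Longrightarrow> lipschitz_on (L i) X (gradf i)"
    and G_convex: "convex_on Om G"
    and V_bdd: "bdd_below ((\<lambda>w. (\<Sum>i\<in>{1..N}. f i w) + G w) ` X)"
    and E_nodes: "\<And>k. E k \<subseteq> {1..N} \<times> {1..N}"
    and B_pos: "B \<ge> 1"
    and B_conn: "\<And>k. strongly_connected_on {1..N} (\<Union>t\<in>{k..<k+B}. E t)"
    and \<kappa>_pos: "\<kappa> > 0"
    and a_nonneg: "\<And>k i j. i \<in> {1..N} \<Longrightarrow> j \<in> {1..N} \<Longrightarrow> a k i j \<ge> 0"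
    and a_zero: "\<And>k i j. i \<in> {1..N} \<Longrightarrow> j \<in> {1..N} \<Longrightarrow> j \<noteq> i \<Longrightarrow> (j, i) \<notin> E k \<Longrightarrow> a k i j = 0"
    and a_edge: "\<And>k i j. i \<in> {1..N} \<Longrightarrow> j \<in> {1..N} \<Longrightarrow> (j, i) \<in> E k \<Longrightarrow> a k i j \<ge> \<kappa>"
    and a_diag: "\<And>k i. i \<in> {1..N} \<Longrightarrow> a k i i \<ge> \<kappa>"
    and a_colstoch: "\<And>k j. j \<in> {1..N} \<Longrightarrow> (\<Sum>i\<in>{1..N}. a k i j) = 1"
    and ft_sc: "\<And>i z. i \<in> {1..N} \<Longrightarrow> z \<in> X \<Longrightarrow> strongly_convex_on (tau i) X (\<lambda>w. ft i w z)"
    and ft_diff: "\<And>i w z. i \<in> {1..N} \<Longrightarrow> w \<in> Om \<Longrightarrow> z \<in> Om \<Longrightarrow>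
                   ((\<lambda>v. ft i v z) has_derivative (\<lambda>h. inner (gradft i w z) h)) (at w)"
    and ft_C1: "\<And>i z. i \<in> {1..N} \<Longrightarrow> z \<in> Om \<Longrightarrow> continuous_on Om (\<lambda>w. gradft i w z)"
    and ft_grad: "\<And>i w. i \<in> {1..N} \<Longrightarrow> w \<in> X \<Longrightarrow> gradft i w w = gradf i w"
    and ft_lip: "\<And>i w. i \<in> {1..N} \<Longrightarrow> w \<in> X \<Longrightarrow> lipschitz_on (Lt i) X (\<lambda>z. gradft i w z)"
    and \<gamma>_range: "\<And>k. 0 < \<gamma> k \<and> \<gamma> k \<le> 1"
    and init_x: "\<And>i. i \<in> {1..N} \<Longrightarrow> x 0 i \<in> X"
    and init_\<phi>: "\<And>i. i \<in> {1..N} \<Longrightarrow> \<phi> 0 i = 1"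
    and init_y: "\<And>i. i \<in> {1..N} \<Longrightarrow> y 0 i = gradf i (x 0 i)"
    and step_xt: "\<And>k i. i \<in> {1..N} \<Longrightarrow> xt k i =
        argmin_on X (\<lambda>w. ft i w (x k i) + inner (real N *\<^sub>R y k i - gradf i (x k i)) (w - x k i) + G w)"
    and step_xh: "\<And>k i. i \<in> {1..N} \<Longrightarrow> xh k i = x k i + \<gamma> k *\<^sub>R (xt k i - x k i)"
    and step_\<phi>: "\<And>k i. i \<in> {1..N} \<Longrightarrow> \<phi> (Suc k) i = (\<Sum>j\<in>{1..N}. a k i j * \<phi> k j)"
    and step_x: "\<And>k i. i \<in> {1..N} \<Longrightarrow> x (Suc k) i =
        (1 / \<phi> (Suc k) i) *\<^sub>R (\<Sum>j\<in>{1..N}. (a k i j * \<phi> k j) *\<^sub>R xh k j)"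
    and step_y: "\<And>k i. i \<in> {1..N} \<Longrightarrow> y (Suc k) i =
        (1 / \<phi> (Suc k) i) *\<^sub>R (\<Sum>j\<in>{1..N}. (a k i j * \<phi> k j) *\<^sub>R y k j)
        + (1 / \<phi> (Suc k) i) *\<^sub>R (gradf i (x (Suc k) i) - gradf i (x k i))"
  shows "\<exists>B2>0. \<forall>k. \<forall>i\<in>{1..N}.
           norm (xt k i - xhat X N ft gradf G i (x k i))
             \<le> B2 * (norm (y k i - (1 / real N) *\<^sub>R (\<Sum>j\<in>{1..N}. \<phi> k j *\<^sub>R y k j))
                     + (\<Sum>j\<in>{1..N}. norm (x k j - (1 / real N) *\<^sub>R (\<Sum>l\<in>{1..N}. \<phi> k l *\<^sub>R x k l))))"
proof -
  define I where "I = {1..N}"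
  have finI: "finite I" and IneI: "I \<noteq> {}" using N_pos by (auto simp: I_def)
  obtain x0 where x0: "x0 \<in> X" using X_ne by auto
  have tau_pos: "tau i > 0" if "i \<in> I" for i
    using ft_sc[of i x0] that x0 by (simp add: I_def strongly_convex_on_def)
  have L_nn: "L i \<ge> 0" if "i \<in> I" for i
    using f_lip[of i] that lipschitz_on_nonneg by (auto simp: I_def)
  have Gconv: "convex_on X G" using convex_on_subset[OF G_convex X_sub_O X_convex] .
  have Gcont: "continuous_on X G"
    using continuous_on_subset[OF convex_on_continuous[OF O_open G_convex] X_sub_O] .
  define H where "H i z c = (\<lambda>w. ft i w z + inner c (w - z) + G w)" for i z and c :: 'a
  have Hsc: "strongly_convex_on (tau i) X (H i z c)" if "i \<in> I" "z \<in> X" for i z c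
  proof -
    have "strongly_convex_on (tau i) X (\<lambda>w. ft i w z + inner c (w - z))"
      using sc_add_convex[OF ft_sc convex_on_affine_inner[OF X_convex]] that by (auto simp: I_def)
    from sc_add_convex[OF this Gconv] show ?thesis by (simp add: H_def)
  qed
  have Hcont: "continuous_on X (H i z c)" if "i \<in> I" "z \<in> X" for i z c
  proof -
    have "continuous_on X (\<lambda>w. ft i w z)"
    proof (rule continuous_at_imp_continuous_on, rule ballI)
      fix w assume "w \<in> X"
      thus "isCont (\<lambda>w. ft i w z) w"
        using has_derivative_continuous[OF ft_diff[of i w z]] that X_sub_O by (auto simp: I_def)
    qed
    moreover have "continuous_on X (\<lambda>w. inner c (w - z))" by (intro continuous_intros)
    ultimately show ?thesis unfolding H_def using Gcont by (intro continuous_intros)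
  qed
  have Hmin: "argmin_on X (H i z c) \<in> X \<and> (\<forall>w\<in>X. H i z c (argmin_on X (H i z c)) \<le> H i z c w)"
    if "i \<in> I" "z \<in> X" for i z c
  proof -
    have "\<exists>u. u \<in> X \<and> (\<forall>w\<in>X. H i z c u \<le> H i z c w)"
      using sc_min_exists[OF X_closed X_convex X_ne Hcont[OF that] Hsc[OF that]] by blast
    from someI_ex[OF this] show ?thesis unfolding argmin_on_def .
  qed
  have Hdist: "norm (argmin_on X (H i z c1) - argmin_on X (H i z c2)) \<le> 2 / tau i * norm (c1 - c2)"
    if "i \<in> I" "z \<in> X" for i z c1 c2
  proof (rule sc_min_dist[OF X_convex Hsc[OF that] Hsc[OF that]])
    show "argmin_on X (H i z c1) \<in> X" "\<forall>w\<in>X. H i z c1 (argmin_on X (H i z c1)) \<le> H i z c1 w"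
      "argmin_on X (H i z c2) \<in> X" "\<forall>w\<in>X. H i z c2 (argmin_on X (H i z c2)) \<le> H i z c2 w"
      using Hmin[OF that] by auto
    fix w
    show "H i z c1 w - H i z c2 w = inner (c1 - c2) w + (- inner (c1 - c2) z)"
      by (simp add: H_def inner_diff_left inner_diff_right algebra_simps)
  qed
  have xt_eq: "xt k i = argmin_on X (H i (x k i) (real N *\<^sub>R y k i - gradf i (x k i)))" if "i \<in> I" for k i
    using step_xt[of i k] that by (simp add: H_def I_def)
  have inv: "\<forall>i\<in>I. \<phi> k i > 0 \<and> x k i \<in> X" for k
  proof (induction k)
    case 0 thus ?case using init_\<phi> init_x by (simp add: I_def)
  next
    case (Suc k)
    have xtX: "xt k i \<in> X" if "i \<in> I" for i
      using Hmin[OF that] Suc that xt_eq[OF that] by auto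
    have xhX: "xh k i \<in> X" if "i \<in> I" for i
    proof -
      have "xh k i = (1 - \<gamma> k) *\<^sub>R x k i + \<gamma> k *\<^sub>R xt k i"
        using step_xh[of i k] that by (simp add: I_def algebra_simps)
      thus ?thesis using convexD[OF X_convex, of "x k i" "xt k i" "1 - \<gamma> k" "\<gamma> k"]
        Suc that xtX[OF that] \<gamma>_range[of k] by auto
    qed
    show ?case
    proof
      fix i assume i: "i \<in> I"
      have nn: "0 \<le> a k i j * \<phi> k j" if j: "j \<in> I" for j
      proof -
        have "0 \<le> a k i j" using a_nonneg i j by (simp add: I_def)
        moreover have "0 < \<phi> k j" using Suc j by auto
        ultimately show ?thesis by simp
      qed
      have "a k i i * \<phi> k i \<le> (\<Sum>j\<in>I. a k i j * \<phi> k j)"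
        using nn by (intro member_le_sum[OF i _ finI]) auto
      moreover have "a k i i * \<phi> k i > 0" using a_diag[of i k] \<kappa>_pos Suc i by (auto simp: I_def)
      ultimately have phipos: "\<phi> (Suc k) i > 0" using step_\<phi>[of i k] i by (simp add: I_def)
      have "x (Suc k) i = (\<Sum>j\<in>I. (1 / \<phi> (Suc k) i * (a k i j * \<phi> k j)) *\<^sub>R xh k j)"
        using step_x[of i k] i by (simp add: I_def scaleR_sum_right)
      moreover have "(\<Sum>j\<in>I. 1 / \<phi> (Suc k) i * (a k i j * \<phi> k j)) = 1"
      proof -
        have "(\<Sum>j\<in>I. 1 / \<phi> (Suc k) i * (a k i j * \<phi> k j)) = 1 / \<phi> (Suc k) i * (\<Sum>j\<in>I. a k i j * \<phi> k j)"
          by (rule sum_distrib_left[symmetric])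
        also have "\<dots> = 1" using step_\<phi>[of i k] i phipos by (simp add: I_def)
        finally show ?thesis .
      qed
      ultimately have "x (Suc k) i \<in> X"
        using convex_sum[OF finI X_convex, of "\<lambda>j. 1 / \<phi> (Suc k) i * (a k i j * \<phi> k j)" "xh k"]
          nn xhX phipos by auto
      thus "\<phi> (Suc k) i > 0 \<and> x (Suc k) i \<in> X" using phipos by simp
    qed
  qed
  have track: "(\<Sum>i\<in>I. \<phi> k i *\<^sub>R y k i) = (\<Sum>i\<in>I. gradf i (x k i))" for k
  proof (induction k)
    case 0 thus ?case using init_\<phi> init_y by (simp add: I_def)
  next
    case (Suc k)
    have e: "\<phi> (Suc k) i *\<^sub>R y (Suc k) i = (\<Sum>j\<in>I. (a k i j * \<phi> k j) *\<^sub>R y k j)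
        + (gradf i (x (Suc k) i) - gradf i (x k i))" if "i \<in> I" for i
    proof -
      have "\<phi> (Suc k) i \<noteq> 0" using inv[of "Suc k"] that by auto
      thus ?thesis using step_y[of i k] that by (simp add: I_def scaleR_add_right)
    qed
    have "(\<Sum>i\<in>I. \<phi> (Suc k) i *\<^sub>R y (Suc k) i)
        = (\<Sum>i\<in>I. \<Sum>j\<in>I. (a k i j * \<phi> k j) *\<^sub>R y k j)
          + ((\<Sum>i\<in>I. gradf i (x (Suc k) i)) - (\<Sum>i\<in>I. gradf i (x k i)))"
      using e by (simp add: sum.distrib sum_subtractf)
    also have "(\<Sum>i\<in>I. \<Sum>j\<in>I. (a k i j * \<phi> k j) *\<^sub>R y k j) = (\<Sum>j\<in>I. \<phi> k j *\<^sub>R y k j)"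
    proof -
      have "(\<Sum>i\<in>I. \<Sum>j\<in>I. (a k i j * \<phi> k j) *\<^sub>R y k j) = (\<Sum>j\<in>I. \<Sum>i\<in>I. (a k i j * \<phi> k j) *\<^sub>R y k j)"
        by (rule sum.swap)
      also have "\<dots> = (\<Sum>j\<in>I. ((\<Sum>i\<in>I. a k i j) * \<phi> k j) *\<^sub>R y k j)"
        by (simp add: scaleR_sum_left sum_distrib_right)
      also have "\<dots> = (\<Sum>j\<in>I. \<phi> k j *\<^sub>R y k j)"
        using a_colstoch by (simp add: I_def)
      finally show ?thesis .
    qed
    finally show ?case using Suc by simp
  qed
  define T where "T = Min (tau ` I)"
  have Tpos: "T > 0" using tau_pos finI IneI by (simp add: T_def)
  have Tle: "T \<le> tau i" if "i \<in> I" for i using finI that by (simp add: T_def)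
  define Lt where "Lt = (\<Sum>j\<in>I. L j)"
  have Ltnn: "Lt \<ge> 0" using L_nn by (simp add: Lt_def sum_nonneg)
  define B2 where "B2 = 2 / T * (real N + 2 * Lt)"
  have B2pos: "B2 > 0" using Tpos Ltnn N_pos by (simp add: B2_def)
  show ?thesis
  proof (intro exI[of _ B2] conjI B2pos allI ballI)
    fix k i assume iN: "i \<in> {1..N}"
    hence i: "i \<in> I" by (simp add: I_def)
    define z where "z = x k i"
    have zX: "z \<in> X" using inv[of k] i by (simp add: z_def)
    define ybar where "ybar = (1 / real N) *\<^sub>R (\<Sum>j\<in>{1..N}. \<phi> k j *\<^sub>R y k j)"
    define xbar where "xbar = (1 / real N) *\<^sub>R (\<Sum>l\<in>{1..N}. \<phi> k l *\<^sub>R x k l)"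
    define A where "A = norm (y k i - ybar)"
    define S where "S = (\<Sum>j\<in>I. norm (x k j - xbar))"
    have Ann: "A \<ge> 0" and Snn: "S \<ge> 0" by (auto simp: A_def S_def sum_nonneg)
    have xhat_eq: "xhat X N ft gradf G i z = argmin_on X (H i z ((\<Sum>j\<in>I. gradf j z) - gradf i z))"
      by (simp add: xhat_def H_def I_def)
    have d1: "norm (xt k i - xhat X N ft gradf G i z)
        \<le> 2 / tau i * norm ((real N *\<^sub>R y k i - gradf i z) - ((\<Sum>j\<in>I. gradf j z) - gradf i z))"
      unfolding xt_eq[OF i] xhat_eq z_def[symmetric] using Hdist[OF i zX] .
    have ce: "(real N *\<^sub>R y k i - gradf i z) - ((\<Sum>j\<in>I. gradf j z) - gradf i z)
        = real N *\<^sub>R (y k i - ybar) + (\<Sum>j\<in>I. gradf j (x k j) - gradf j z)"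
    proof -
      have "real N *\<^sub>R ybar = (\<Sum>j\<in>I. gradf j (x k j))"
        using track[of k] N_pos by (simp add: ybar_def I_def)
      thus ?thesis by (simp add: scaleR_diff_right sum_subtractf)
    qed
    have xdist: "norm (x k j - z) \<le> 2 * S" if "j \<in> I" for j
    proof -
      have "norm (x k j - xbar) \<le> S" "norm (z - xbar) \<le> S"
        unfolding S_def z_def using member_le_sum[OF that, of "\<lambda>j. norm (x k j - xbar)"]
          member_le_sum[OF i, of "\<lambda>j. norm (x k j - xbar)"] finI by auto
      moreover have "norm (x k j - z) \<le> norm (x k j - xbar) + norm (z - xbar)"
        using norm_triangle_ineq4[of "x k j - xbar" "z - xbar"] by simp
      ultimately show ?thesis by linarith
    qed
    have gsum: "norm (\<Sum>j\<in>I. gradf j (x k j) - gradf j z) \<le> 2 * Lt * S"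
    proof -
      have "norm (\<Sum>j\<in>I. gradf j (x k j) - gradf j z) \<le> (\<Sum>j\<in>I. norm (gradf j (x k j) - gradf j z))"
        by (rule norm_sum)
      also have "\<dots> \<le> (\<Sum>j\<in>I. L j * (2 * S))"
      proof (rule sum_mono)
        fix j assume j: "j \<in> I"
        have xj: "x k j \<in> X" using inv[of k] j by auto
        have "norm (gradf j (x k j) - gradf j z) \<le> L j * norm (x k j - z)"
          using lipschitz_onD[OF f_lip xj zX] j by (simp add: I_def dist_norm)
        also have "\<dots> \<le> L j * (2 * S)" using xdist[OF j] L_nn[OF j] by (rule mult_left_mono)
        finally show "norm (gradf j (x k j) - gradf j z) \<le> L j * (2 * S)" .
      qed
      also have "\<dots> = (\<Sum>j\<in>I. L j) * (2 * S)" by (rule sum_distrib_right[symmetric])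
      also have "\<dots> = 2 * Lt * S" by (simp add: Lt_def)
      finally show ?thesis .
    qed
    have cn: "norm ((real N *\<^sub>R y k i - gradf i z) - ((\<Sum>j\<in>I. gradf j z) - gradf i z)) \<le> real N * A + 2 * Lt * S"
    proof -
      have "norm (real N *\<^sub>R (y k i - ybar) + (\<Sum>j\<in>I. gradf j (x k j) - gradf j z))
          \<le> norm (real N *\<^sub>R (y k i - ybar)) + norm (\<Sum>j\<in>I. gradf j (x k j) - gradf j z)"
        by (rule norm_triangle_ineq)
      moreover have "norm (real N *\<^sub>R (y k i - ybar)) = real N * A" by (simp add: A_def)
      ultimately show ?thesis unfolding ce using gsum by linarith
    qed
    have tinv: "0 \<le> 2 / tau i" using tau_pos[OF i] by simp
    have "2 / tau i * norm ((real N *\<^sub>R y k i - gradf i z) - ((\<Sum>j\<in>I. gradf j z) - gradf i z))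
        \<le> 2 / tau i * (real N * A + 2 * Lt * S)"
      by (rule mult_left_mono[OF cn tinv])
    with d1 have "norm (xt k i - xhat X N ft gradf G i z) \<le> 2 / tau i * (real N * A + 2 * Lt * S)"
      by (rule order_trans)
    also have "\<dots> \<le> 2 / T * (real N * A + 2 * Lt * S)"
    proof (rule mult_right_mono)
      show "2 / tau i \<le> 2 / T" using Tle[OF i] Tpos by (simp add: frac_le)
      show "0 \<le> real N * A + 2 * Lt * S" using Ann Snn Ltnn by simp
    qed
    also have "\<dots> \<le> B2 * (A + S)"
    proof -
      have "real N * A + 2 * Lt * S \<le> (real N + 2 * Lt) * (A + S)"
        using Ann Snn Ltnn by (simp add: algebra_simps)
      moreover have "0 \<le> 2 / T" using Tpos by simp
      ultimately have "2 / T * (real N * A + 2 * Lt * S) \<le> 2 / T * ((real N + 2 * Lt) * (A + S))"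
        by (rule mult_left_mono)
      thus ?thesis unfolding B2_def by (simp only: mult.assoc)
    qed
    finally show "norm (xt k i - xhat X N ft gradf G i (x k i))
             \<le> B2 * (norm (y k i - (1 / real N) *\<^sub>R (\<Sum>j\<in>{1..N}. \<phi> k j *\<^sub>R y k j))
                     + (\<Sum>j\<in>{1..N}. norm (x k j - (1 / real N) *\<^sub>R (\<Sum>l\<in>{1..N}. \<phi> k l *\<^sub>R x k l))))"
      by (simp add: z_def A_def S_def ybar_def xbar_def I_def)
  qed
qed

end
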